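(* Let $h_1\subsetneq h_2^*$ be strongly separated half-spaces, let $\xi_1\in h_1$ and $\xi_2\in h_2$ be points of $\overline X$, and let $p\in B(h_1,h_2)$. Then $m(\xi_1,p,\xi_2)=p$.
   Context: $X$ is a finite-dimensional CAT(0) cube complex identified with its vertex set, $\mathfrak H$ its set of half-spaces, $h^*=X\setminus h$, $U_v=\{h:v\in h\}$; the Roller compactification $\overline X$ is the closure of $\{U_v\}$ in $2^{\mathfrak H}$, each $\xi\in\overline X$ a subset $U_\xi$, and a half-space $h$ is regarded as $\{\xi\in\overline X:h\in U_\xi\}$. The median $m(u,v,w)$ of $u,v,w\in\overline X$ is the point with $U_m=(U_u\cap U_v)\cup(U_v\cap U_w)\cup(U_w\cap U_u)$. Transverse ($\pitchfork$): all four intersections $h\cap k,h\cap k^*,h^*\cap k,h^*\cap k^*$ nonempty; strongly separated: no half-space transverse to both. Write $\hat a\subset b$ if $a\subsetneq b$ or $a^*\subsetneq b$. $\beta(h_1,h_2)$ is the set of $h$ with ($\hat h_1\subset h$, $h\pitchfork h_2$) or ($\hat h_2\subset h$, $h\pitchfork h_1$) or ($\hat h_1\subset h$, $\hat h_2\subset h$); $B(h_1,h_2)=\{x\in X:x\in h\ \forall h\in\beta(h_1,h_2)\}$. *)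

theory Defs
  imports Main
begin

text \<open>A CAT(0) cube complex is modelled by its 1-skeleton, a median graph
  (Chepoi/Roller).  Vertices form the type 'a; E is the adjacency relation.\<close>

definition walk :: "('a \<Rightarrow> 'a \<Rightarrow> bool) \<Rightarrow> 'a list \<Rightarrow> bool" where
  "walk E xs \<longleftrightarrow> xs \<noteq> [] \<and> (\<forall>i. Suc i < length xs \<longrightarrow> E (xs ! i) (xs ! Suc i))"

definition gdist :: "('a \<Rightarrow> 'a \<Rightarrow> bool) \<Rightarrow> 'a \<Rightarrow> 'a \<Rightarrow> nat" where
  "gdist E u v = (LEAST n. \<exists>xs. walk E xs \<and> hd xs = u \<and> last xs = v \<and> length xs = Suc n)"

definition interval :: "('a \<Rightarrow> 'a \<Rightarrow> bool) \<Rightarrow> 'a \<Rightarrow> 'a \<Rightarrow> 'a set" where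
  "interval E u v = {z. gdist E u z + gdist E z v = gdist E u v}"

definition median_graph :: "('a \<Rightarrow> 'a \<Rightarrow> bool) \<Rightarrow> bool" where
  "median_graph E \<longleftrightarrow>
     (\<forall>x y. E x y \<longrightarrow> E y x) \<and> (\<forall>x. \<not> E x x) \<and>
     (\<forall>u v. \<exists>xs. walk E xs \<and> hd xs = u \<and> last xs = v) \<and>
     (\<forall>x y z. \<exists>!m. m \<in> interval E x y \<inter> interval E y z \<inter> interval E x z)"

definition gconvex :: "('a \<Rightarrow> 'a \<Rightarrow> bool) \<Rightarrow> 'a set \<Rightarrow> bool" where
  "gconvex E S \<longleftrightarrow> (\<forall>x\<in>S. \<forall>y\<in>S. interval E x y \<subseteq> S)"

definition halfspaces :: "('a \<Rightarrow> 'a \<Rightarrow> bool) \<Rightarrow> 'a set set" where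
  "halfspaces E = {h. h \<noteq> {} \<and> h \<noteq> UNIV \<and> gconvex E h \<and> gconvex E (- h)}"

definition transverse :: "'a set \<Rightarrow> 'a set \<Rightarrow> bool" where
  "transverse h k \<longleftrightarrow> h \<inter> k \<noteq> {} \<and> h \<inter> - k \<noteq> {} \<and> - h \<inter> k \<noteq> {} \<and> - h \<inter> - k \<noteq> {}"

definition finite_dim :: "('a \<Rightarrow> 'a \<Rightarrow> bool) \<Rightarrow> bool" where
  "finite_dim E \<longleftrightarrow> (\<exists>D::nat. \<forall>F \<subseteq> halfspaces E.
      (\<forall>h\<in>F. \<forall>k\<in>F. h \<noteq> k \<longrightarrow> transverse h k) \<longrightarrow> finite F \<and> card F \<le> D)"

definition strongly_separated :: "('a \<Rightarrow> 'a \<Rightarrow> bool) \<Rightarrow> 'a set \<Rightarrow> 'a set \<Rightarrow> bool" where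
  "strongly_separated E h k \<longleftrightarrow> \<not> (\<exists>l\<in>halfspaces E. transverse l h \<and> transverse l k)"

definition Uv :: "('a \<Rightarrow> 'a \<Rightarrow> bool) \<Rightarrow> 'a \<Rightarrow> 'a set set" where
  "Uv E v = {h \<in> halfspaces E. v \<in> h}"

text \<open>Roller compactification: closure of {U_v} in the product topology on 2^H,
  i.e. every finite set of half-spaces sees U as some U_v.\<close>
definition roller :: "('a \<Rightarrow> 'a \<Rightarrow> bool) \<Rightarrow> 'a set set set" where
  "roller E = {U. U \<subseteq> halfspaces E \<and>
      (\<forall>F. finite F \<longrightarrow> F \<subseteq> halfspaces E \<longrightarrow> (\<exists>v. Uv E v \<inter> F = U \<inter> F))}"

definition median_pt :: "'b set \<Rightarrow> 'b set \<Rightarrow> 'b set \<Rightarrow> 'b set" where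
  "median_pt U V W = (U \<inter> V) \<union> (V \<inter> W) \<union> (W \<inter> U)"

definition hatsub :: "'a set \<Rightarrow> 'a set \<Rightarrow> bool" where
  "hatsub a b \<longleftrightarrow> a \<subset> b \<or> - a \<subset> b"

definition beta :: "('a \<Rightarrow> 'a \<Rightarrow> bool) \<Rightarrow> 'a set \<Rightarrow> 'a set \<Rightarrow> 'a set set" where
  "beta E h1 h2 = {h \<in> halfspaces E.
      (hatsub h1 h \<and> transverse h h2) \<or> (hatsub h2 h \<and> transverse h h1) \<or>
      (hatsub h1 h \<and> hatsub h2 h)}"

definition Bset :: "('a \<Rightarrow> 'a \<Rightarrow> bool) \<Rightarrow> 'a set \<Rightarrow> 'a set \<Rightarrow> 'a set" where
  "Bset E h1 h2 = {x. \<forall>h\<in>beta E h1 h2. x \<in> h}"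

end

theory Submission
  imports Defs
begin

lemma key:
  fixes h h1 h2 :: "'a set"
  assumes "h \<noteq> {}" "h \<noteq> UNIV" "h1 \<noteq> {}" "h2 \<noteq> {}" "h1 \<subset> - h2"
    "\<not> (transverse h h1 \<and> transverse h h2)" "h \<inter> h1 \<noteq> {}" "h \<inter> h2 \<noteq> {}"
    "h \<noteq> - h1" "h \<noteq> - h2"
  shows "(hatsub h1 h \<and> transverse h h2) \<or> (hatsub h2 h \<and> transverse h h1) \<or> (hatsub h1 h \<and> hatsub h2 h)"
proof -
  have d: "h1 \<inter> h2 = {}" "h1 \<noteq> - h2" using assms(5) by auto
  have c1: "transverse h h1 \<or> h \<subseteq> h1 \<or> h1 \<subseteq> h \<or> - h1 \<subseteq> h"
    using assms(7)  unfolding transverse_def by blast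
  have c2: "transverse h h2 \<or> h \<subseteq> h2 \<or> h2 \<subseteq> h \<or> - h2 \<subseteq> h"
    using assms(8)  unfolding transverse_def by blast
  have t1: "transverse h h1 \<Longrightarrow> h2 \<subset> h" using c2 assms d  unfolding transverse_def by blast
  have t2: "transverse h h2 \<Longrightarrow> h1 \<subset> h" using c1 assms d  unfolding transverse_def by blast
  show ?thesis
  proof (cases "transverse h h1")
    case True then show ?thesis using t1 unfolding hatsub_def by blast
  next
    case f1: False
    show ?thesis
    proof (cases "transverse h h2")
      case True then show ?thesis using t2 unfolding hatsub_def by blast
    next
      case f2: False
      have a1: "h \<subseteq> h1 \<or> h1 \<subseteq> h \<or> - h1 \<subseteq> h" using c1 f1 by blast
      have a2: "h \<subseteq> h2 \<or> h2 \<subseteq> h \<or> - h2 \<subseteq> h" using c2 f2 by blast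
      have "hatsub h1 h \<and> hatsub h2 h"
        using a1 a2
      proof (elim disjE)
      qed (use assms d in \<open>unfold hatsub_def; blast\<close>)+
      then show ?thesis by blast
    qed
  qed
qed

lemma hs_compl: "h \<in> halfspaces E \<Longrightarrow> - h \<in> halfspaces E"
  unfolding halfspaces_def by auto

lemma roller_two:
  assumes "U \<in> roller E" "a \<in> halfspaces E" "b \<in> halfspaces E"
  shows "\<exists>v. Uv E v \<inter> {a, b} = U \<inter> {a, b}"
  using assms unfolding roller_def by auto

lemma roller_meet:
  assumes "U \<in> roller E" "a \<in> U" "b \<in> U"
  shows "a \<inter> b \<noteq> {}"
proof -
  have "a \<in> halfspaces E" "b \<in> halfspaces E" using assms unfolding roller_def by auto
  then obtain v where "Uv E v \<inter> {a, b} = U \<inter> {a, b}" using roller_two assms(1) by blast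
  then have "a \<in> Uv E v" "b \<in> Uv E v" using assms by blast+
  then show ?thesis unfolding Uv_def by auto
qed

lemma roller_one:
  assumes "U \<in> roller E" "h \<in> halfspaces E"
  shows "h \<in> U \<longleftrightarrow> - h \<notin> U"
proof -
  have c: "- h \<in> halfspaces E" using hs_compl assms by blast
  obtain v where v: "Uv E v \<inter> {h, - h} = U \<inter> {h, - h}" using roller_two[OF assms c] by blast
  have "h \<in> Uv E v \<longleftrightarrow> - h \<notin> Uv E v" unfolding Uv_def using assms c by auto
  moreover have "h \<in> Uv E v \<longleftrightarrow> h \<in> U" using v by blast
  moreover have "- h \<in> Uv E v \<longleftrightarrow> - h \<in> U" using v by blast
  ultimately show ?thesis by blast
qed

theorem lemma3:
  fixes E :: "'a \<Rightarrow> 'a \<Rightarrow> bool"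
    and h1 h2 :: "'a set" and \<xi>1 \<xi>2 :: "'a set set" and p :: 'a
  assumes "median_graph E" and "finite_dim E"
    and "h1 \<in> halfspaces E" and "h2 \<in> halfspaces E"
    and "h1 \<subset> - h2" and "strongly_separated E h1 h2"
    and "\<xi>1 \<in> roller E" and "\<xi>2 \<in> roller E"
    and "h1 \<in> \<xi>1" and "h2 \<in> \<xi>2"
    and "p \<in> Bset E h1 h2"
  shows "median_pt \<xi>1 (Uv E p) \<xi>2 = Uv E p"
proof -
  have main: "p \<in> h" if h: "h \<in> \<xi>1" "h \<in> \<xi>2" for h
  proof -
    have hh: "h \<in> halfspaces E" using h assms(7) unfolding roller_def by auto
    have ne: "h \<noteq> {}" "h \<noteq> UNIV" "h1 \<noteq> {}" "h2 \<noteq> {}"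
      using hh assms(3,4) unfolding halfspaces_def by auto
    have m1: "h \<inter> h1 \<noteq> {}" using roller_meet[OF assms(7) h(1) assms(9)] .
    have m2: "h \<inter> h2 \<noteq> {}" using roller_meet[OF assms(8) h(2) assms(10)] .
    have n1: "h \<noteq> - h1" using roller_one[OF assms(7) assms(3)] h(1) assms(9) by auto
    have n2: "h \<noteq> - h2" using roller_one[OF assms(8) assms(4)] h(2) assms(10) by auto
    have nt: "\<not> (transverse h h1 \<and> transverse h h2)"
      using assms(6) hh unfolding strongly_separated_def by blast
    have "h \<in> beta E h1 h2"
      using key[OF ne assms(5) nt m1 m2 n1 n2] hh unfolding beta_def by blast
    then show ?thesis using assms(11) unfolding Bset_def by blast
  qed
  show ?thesis
  proof
    show "median_pt \<xi>1 (Uv E p) \<xi>2 \<subseteq> Uv E p"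
      unfolding median_pt_def using main assms(7) unfolding Uv_def roller_def by blast
  next
    show "Uv E p \<subseteq> median_pt \<xi>1 (Uv E p) \<xi>2"
    proof
      fix h assume hp: "h \<in> Uv E p"
      then have hh: "h \<in> halfspaces E" and ph: "p \<in> h" unfolding Uv_def by auto
      show "h \<in> median_pt \<xi>1 (Uv E p) \<xi>2"
      proof (rule ccontr)
        assume "h \<notin> median_pt \<xi>1 (Uv E p) \<xi>2"
        then have "h \<notin> \<xi>1" "h \<notin> \<xi>2" using hp unfolding median_pt_def by auto
        then have "- h \<in> \<xi>1" "- h \<in> \<xi>2"
          using roller_one[OF assms(7) hh] roller_one[OF assms(8) hh] by auto
        then have "p \<in> - h" using main by blast
        then show False using ph by auto
      qed
    qed
  qed
qed

end
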